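(* For every positive integer $n$ and every prime $p$, there exists $k_0$ such that for every integer $k\ge k_0$ the number $np^k$ satisfies Condition 1 with $p$ and another prime; that is, there is a prime $q\neq p$ such that for every integer $j$ with $1\le j\le np^k-1$, the binomial coefficient $\binom{np^k}{j}$ is divisible by $p$ or by $q$.
   Context: A positive integer $N$ satisfies Condition 1 with primes $p$ and $q$ if for all integers $j$ with $1\le j\le N-1$ the binomial coefficient $\binom{N}{j}$ is divisible by at least one of $p$ or $q$. *)

theory Defs
  imports "HOL-Computational_Algebra.Primes"
begin

definition condition1 :: "nat \<Rightarrow> nat \<Rightarrow> nat \<Rightarrow> bool" where
  "condition1 N p q \<longleftrightarrow>
     (\<forall>j::nat. 1 \<le> j \<and> j \<le> N - 1 \<longrightarrow> p dvd (N choose j) \<or> q dvd (N choose j))"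

end

theory Submission imports Defs begin

lemma div_Suc_ind: "(0::nat) < d \<Longrightarrow> Suc n div d = n div d + (if d dvd Suc n then 1 else 0)"
  by (simp add: div_Suc mod_eq_0_iff_dvd)

lemma mult_le_self:
  assumes "prime (q::nat)" "m > 0" shows "multiplicity q m \<le> m"
proof -
  have "q ^ multiplicity q m dvd m" by (rule multiplicity_dvd)
  hence "q ^ multiplicity q m \<le> m" using assms(2) by (rule dvd_imp_le)
  moreover have "multiplicity q m < 2 ^ multiplicity q m" by (rule less_exp)
  moreover have "2 ^ multiplicity q m \<le> q ^ multiplicity q m"
    using prime_ge_2_nat[OF assms(1)] by (simp add: power_mono)
  ultimately show ?thesis by linarith
qed

lemma mult_as_sum:
  assumes "prime (q::nat)" "m > 0" "m \<le> M"
  shows "multiplicity q m = (\<Sum>i=1..M. if q ^ i dvd m then 1 else 0)"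
proof -
  have "{i\<in>{1..M}. q ^ i dvd m} = {1..multiplicity q m}"
  proof -
    have nu: "\<not> is_unit q" using assms(1) not_prime_unit by blast
    have m0: "m \<noteq> 0" using assms(2) by simp
    have iff: "\<And>i. q^i dvd m \<longleftrightarrow> i \<le> multiplicity q m"
      by (rule power_dvd_iff_le_multiplicity[OF m0 nu])
    have ml: "multiplicity q m \<le> M" using mult_le_self[OF assms(1,2)] assms(3) by linarith
    show ?thesis
    proof (rule set_eqI)
      fix i show "i \<in> {i\<in>{1..M}. q ^ i dvd m} \<longleftrightarrow> i \<in> {1..multiplicity q m}"
        unfolding iff using ml by auto
    qed
  qed
  moreover have "(\<Sum>i=1..M. if q ^ i dvd m then 1 else 0) = (\<Sum>i\<in>{i\<in>{1..M}. q ^ i dvd m}. 1::nat)"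
    by (rule sum.inter_filter[symmetric]) simp
  ultimately have "(\<Sum>i=1..M. if q ^ i dvd m then 1 else 0) = card {1..multiplicity q m}"
    by simp
  thus ?thesis by simp
qed

lemma legendre:
  assumes "prime (q::nat)"
  shows "n \<le> M \<Longrightarrow> multiplicity q (fact n) = (\<Sum>i=1..M. n div q ^ i)"
proof (induction n)
  case 0
  then show ?case by simp
next
  case (Suc n)
  have qpos: "\<And>i. 0 < q ^ i" using prime_gt_0_nat[OF assms] by simp
  have "multiplicity q (fact (Suc n) :: nat) = multiplicity q (Suc n * fact n)"
    by (simp add: fact_Suc)
  also have "\<dots> = multiplicity q (Suc n) + multiplicity q (fact n :: nat)"
    using assms by (intro prime_elem_multiplicity_mult_distrib) auto
  also have "multiplicity q (fact n :: nat) = (\<Sum>i=1..M. n div q ^ i)" using Suc by simp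
  also have "multiplicity q (Suc n) = (\<Sum>i=1..M. if q ^ i dvd Suc n then 1 else 0)"
    using Suc assms by (intro mult_as_sum) auto
  also have "(\<Sum>i=1..M. if q ^ i dvd Suc n then 1 else 0) + (\<Sum>i=1..M. n div q ^ i)
      = (\<Sum>i=1..M. Suc n div q ^ i)"
    by (simp add: sum.distrib[symmetric] div_Suc_ind[OF qpos] add.commute)
  finally show ?case .
qed

lemma kummer_one:
  assumes "prime (q::nat)" "e \<ge> 1" "a div q^e + b div q^e < (a+b) div q^e"
  shows "q dvd ((a+b) choose a)"
proof -
  let ?M = "a+b"
  let ?f = "\<lambda>x i. x div q ^ i"
  have qpos: "0 < q ^ e" using prime_gt_0_nat[OF assms(1)] by simp
  have "q ^ e \<le> a + b"
  proof (rule ccontr)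
    assume "\<not> ?thesis" thus False using assms(3) by simp
  qed
  moreover have "e < q ^ e"
  proof -
    have "e < 2 ^ e" by (rule less_exp)
    also have "(2::nat) ^ e \<le> q ^ e" using prime_ge_2_nat[OF assms(1)] by (simp add: power_mono)
    finally show ?thesis .
  qed
  ultimately have eM: "e \<in> {1..?M}" using assms(2) by auto
  have fe: "fact ?M = fact a * fact b * (?M choose a)"
    using binomial_fact_lemma[of a ?M] by simp
  have C0: "(?M choose a) \<noteq> 0" by simp
  have "multiplicity q (fact ?M :: nat) = multiplicity q (fact a :: nat) + multiplicity q (fact b :: nat) + multiplicity q (?M choose a)"
    using assms(1) unfolding fe
    by (simp add: prime_elem_multiplicity_mult_distrib)
  hence eq: "(\<Sum>i=1..?M. ?f ?M i) = (\<Sum>i=1..?M. ?f a i) + (\<Sum>i=1..?M. ?f b i) + multiplicity q (?M choose a)"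
    using legendre[OF assms(1), of ?M ?M] legendre[OF assms(1), of a ?M] legendre[OF assms(1), of b ?M]
    by simp
  have le: "\<And>i. ?f a i + ?f b i \<le> ?f ?M i" by (simp add: div_add1_eq[of a b])
  have "(\<Sum>i=1..?M. ?f a i) + (\<Sum>i=1..?M. ?f b i) = (\<Sum>i=1..?M. ?f a i + ?f b i)"
    by (simp add: sum.distrib)
  also have "\<dots> = (?f a e + ?f b e) + (\<Sum>i\<in>{1..?M}-{e}. ?f a i + ?f b i)"
    using eM by (simp add: sum.remove)
  also have "\<dots> < ?f ?M e + (\<Sum>i\<in>{1..?M}-{e}. ?f ?M i)"
    using assms(3) le by (intro add_less_le_mono sum_mono) auto
  also have "\<dots> = (\<Sum>i=1..?M. ?f ?M i)" using eM by (simp add: sum.remove)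
  finally have "multiplicity q (?M choose a) > 0" using eq by linarith
  thus ?thesis using not_dvd_imp_multiplicity_0 by (metis less_irrefl)
qed


lemma big_prime_power:
  assumes "(y::nat) > n ^ n" "n \<ge> 1"
  shows "\<exists>q. prime q \<and> q ^ multiplicity q y dvd y \<and> q ^ multiplicity q y > n"
proof (rule ccontr)
  assume H: "\<not> ?thesis"
  have y0: "y > 0" using assms by linarith
  have le: "\<And>q. q \<in> prime_factors y \<Longrightarrow> q ^ multiplicity q y \<le> n"
    using H multiplicity_dvd by (metis in_prime_factors_iff not_le)
  have sub: "prime_factors y \<subseteq> {1..n}"
  proof
    fix q assume qi: "q \<in> prime_factors y"
    hence qq: "prime q" "q dvd y" "y \<noteq> 0" by (auto simp: in_prime_factors_iff)
    hence "multiplicity q y > 0" by (simp add: prime_multiplicity_gt_zero_iff)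
    hence "multiplicity q y \<ge> 1" by simp
    hence "q ^ 1 \<le> q ^ multiplicity q y" using prime_gt_0_nat[OF qq(1)]
      by (intro power_increasing) auto
    hence "q \<le> q ^ multiplicity q y" by simp
    thus "q \<in> {1..n}" using le[OF qi] qi
      by (metis atLeastAtMost_iff in_prime_factors_iff le_trans prime_ge_1_nat)
  qed
  have "card (prime_factors y) \<le> n" using card_mono[OF _ sub] by simp
  hence "(\<Prod>q \<in> prime_factors y. q ^ multiplicity q y) \<le> n ^ n"
    using le assms(2) by (intro prod_le_power) auto
  hence "y \<le> n ^ n" using prime_factorization_nat[OF y0] by simp
  thus False using assms(1) by simp
qed

lemma carry_p:
  assumes "(Q::nat) > 0" "Q dvd N" "\<not> Q dvd j" "j \<le> N"
  shows "j div Q + (N - j) div Q < N div Q"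
proof -
  have "\<not> Q dvd (N - j)" using assms by (metis diff_diff_cancel dvd_diff_nat)
  hence m2: "(N - j) mod Q > 0" using mod_eq_0_iff_dvd by (metis gr0I)
  have m1: "j mod Q > 0" using assms(3) mod_eq_0_iff_dvd by (metis gr0I)
  have "(j mod Q + (N - j) mod Q) mod Q = N mod Q" using assms(4)
    by (metis le_add_diff_inverse mod_add_eq)
  hence "Q dvd (j mod Q + (N - j) mod Q)" using assms(2) by (simp add: mod_eq_0_iff_dvd[symmetric])
  then obtain t where t: "j mod Q + (N - j) mod Q = Q * t" by blast
  have "Q * t < Q * 2" using t mod_less_divisor[OF assms(1), of j] mod_less_divisor[OF assms(1), of "N-j"] by linarith
  hence "t < 2" using assms(1) by simp
  moreover have "t > 0" using t m1 by (metis add_gr_0 mult_0_right neq0_conv)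
  ultimately have "t = 1" by simp
  hence "(j mod Q + (N - j) mod Q) div Q = 1" using t assms(1) by simp
  moreover have "N div Q = j div Q + (N - j) div Q + (j mod Q + (N - j) mod Q) div Q"
    using div_add1_eq[of j "N - j" Q] assms(4) by simp
  ultimately show ?thesis by simp
qed

lemma mod_neg:
  assumes "(Q::nat) dvd x + 1" "1 \<le> c" "c < Q"
  shows "(c * x) mod Q + c = Q"
proof -
  have Q0: "Q > 0" using assms by simp
  have "Q dvd c * (x + 1)" using assms(1) by (rule dvd_mult)
  hence "Q dvd c * x + c" by (simp add: algebra_simps)
  hence "(c * x + c) mod Q = 0" by simp
  hence "((c * x) mod Q + c) mod Q = 0" by (simp add: mod_add_left_eq)
  hence "Q dvd (c * x) mod Q + c" using mod_0_imp_dvd by blast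
  then obtain t where t: "(c * x) mod Q + c = Q * t" by blast
  have "Q * t < Q * 2" using t mod_less_divisor[OF Q0, of "c*x"] assms by linarith
  hence "t < 2" using Q0 by simp
  moreover have "t > 0" using t assms(2) by (metis add_gr_0 mult_0_right neq0_conv less_le_trans zero_less_one)
  ultimately have "t = 1" by simp
  thus ?thesis using t by simp
qed

lemma carry_q:
  assumes "(Q::nat) dvd x + 1" "n < Q" "1 \<le> j" "j < n"
  shows "(j * x) div Q + ((n - j) * x) div Q < (j * x + (n - j) * x) div Q"
proof -
  have Q0: "Q > 0" using assms by simp
  have a: "(j * x) mod Q + j = Q" using mod_neg[OF assms(1)] assms by simp
  have b: "((n - j) * x) mod Q + (n - j) = Q" using mod_neg[OF assms(1), of "n - j"] assms by linarith
  have "Q \<le> (j * x) mod Q + ((n - j) * x) mod Q" using a b assms by linarith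
  hence "Q div Q \<le> ((j * x) mod Q + ((n - j) * x) mod Q) div Q" by (rule div_le_mono)
  hence "((j * x) mod Q + ((n - j) * x) mod Q) div Q \<ge> 1" using Q0 by simp
  thus ?thesis using div_add1_eq[of "j*x" "(n-j)*x" Q] by simp
qed

theorem mainTheorem1:
  fixes n p :: nat
  assumes "n > 0" and "prime p"
  shows "\<exists>k0::nat. \<forall>k::nat. k \<ge> k0 \<longrightarrow>
           (\<exists>q::nat. prime q \<and> q \<noteq> p \<and> condition1 (n * p ^ k) p q)"
proof (rule exI[of _ "n * n + 1"], intro allI impI)
  fix k assume k: "n * n + 1 \<le> k"
  define x where "x = p ^ k"
  have p2: "p \<ge> 2" using prime_ge_2_nat[OF assms(2)] .
  have "n ^ n \<le> (2 ^ n) ^ n" using power_mono[of n "2^n" n] less_exp[of n] by simp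
  also have "\<dots> = 2 ^ (n * n)" by (simp add: power_mult[symmetric])
  also have "\<dots> < 2 ^ k" using k by simp
  also have "\<dots> \<le> x" unfolding x_def using p2 by (simp add: power_mono)
  finally have "x + 1 > n ^ n" by simp
  then obtain q where q: "prime q" "q ^ multiplicity q (x + 1) dvd x + 1"
    "q ^ multiplicity q (x + 1) > n"
    using big_prime_power[of n "x + 1"] assms(1) by auto
  define e where "e = multiplicity q (x + 1)"
  define Q where "Q = q ^ e"
  have QQ: "Q dvd x + 1" "Q > n" using q unfolding Q_def e_def by auto
  have e1: "e \<ge> 1"
  proof (rule ccontr)
    assume "\<not> ?thesis" hence "e = 0" by simp
    thus False using QQ(2) assms(1) unfolding Q_def by simp
  qed
  have k1: "k \<ge> 1" using k by simp
  have qp: "q \<noteq> p"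
  proof
    assume "q = p"
    moreover have "q dvd q ^ e" using e1 by (intro dvd_power) auto
    ultimately have "p dvd x + 1" using QQ(1) unfolding Q_def by (metis dvd_trans)
    moreover have "p dvd x" unfolding x_def using k1 by (simp add: dvd_power)
    ultimately have "p dvd 1" by (metis dvd_add_right_iff)
    thus False using assms(2) by simp
  qed
  have "condition1 (n * x) p q"
    unfolding condition1_def
  proof (intro allI impI)
    fix j assume j: "1 \<le> j \<and> j \<le> n * x - 1"
    show "p dvd (n * x choose j) \<or> q dvd (n * x choose j)"
    proof (cases "x dvd j")
      case False
      have "j div x + (n * x - j) div x < (n * x) div x"
      proof (rule carry_p)
        show "0 < x" unfolding x_def using p2 by simp
        show "x dvd n * x" by simp
        show "\<not> x dvd j" by (rule False)
        show "j \<le> n * x" using j by linarith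
      qed
      moreover have jN: "j + (n * x - j) = n * x" using j by linarith
      ultimately have "p dvd ((j + (n * x - j)) choose j)"
        using kummer_one[OF assms(2) k1, of j "n * x - j"] unfolding x_def by simp
      thus ?thesis using jN by simp
    next
      case True
      then obtain j' where j': "j = j' * x" by (metis dvd_def mult.commute)
      have x0: "x > 0" unfolding x_def using p2 by simp
      have "j' \<ge> 1" using j j' by (metis One_nat_def Suc_leI mult_0 not_gr0 not_less_eq_eq)
      moreover have "j' < n"
      proof -
        have "n * x > 0" using x0 assms(1) by simp
        hence "j' * x < n * x" using j j' by linarith
        thus ?thesis by simp
      qed
      ultimately have "(j' * x) div q ^ e + ((n - j') * x) div q ^ e < (j' * x + (n - j') * x) div q ^ e"
        using carry_q[OF QQ(1)] QQ(2) unfolding Q_def by blast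
      hence "q dvd ((j' * x + (n - j') * x) choose (j' * x))"
        using kummer_one[OF q(1) e1] by blast
      moreover have "j' * x + (n - j') * x = n * x" using \<open>j' < n\<close>
        by (simp add: add_mult_distrib[symmetric])
      ultimately show ?thesis using j' by simp
    qed
  qed
  thus "\<exists>q. prime q \<and> q \<noteq> p \<and> condition1 (n * p ^ k) p q" using q(1) qp unfolding x_def by blast
qed

end
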